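(* Let $R>0$ and let $A\subset\mathbb{R}^d$ be such that $A$ and $\overline{A^c}$ are $R$-supported bodies. If $a_0\in\partial A\cap\partial\overline{A^c}$, then there exist $y_0,y_1\in\mathbb{R}^d$ such that (i) $B(y_0)\subset A^c$ and $B(y_1)\subset(\overline{A^c})^c=\operatorname{int}(A)$; (ii) $B(y_0)\cap B(y_1)=\emptyset$ and $\partial B(y_0)\cap\partial B(y_1)=\{a_0\}$.
   Context: A body is a nonempty closed subset of $\mathbb{R}^d$; $A^c=\mathbb{R}^d\setminus A$, $\overline{X}$ denotes closure; $B(x)=\{y:|y-x|<R\}$; $S^{d-1}$ the unit sphere. For a body $A$ and $a\in\partial A$, $\mathcal{N}_R(A,a)=\{v\in S^{d-1}: A\cap B(a+Rv)=\emptyset\}$; $A$ is $R$-supported if $\mathcal{N}_R(A,a)\ne\emptyset$ for all $a\in\partial A$. *)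

theory Defs
  imports "HOL-Analysis.Analysis"
begin

definition body :: "'a::euclidean_space set \<Rightarrow> bool" where
  "body A \<longleftrightarrow> A \<noteq> {} \<and> closed A"

definition normals_R :: "real \<Rightarrow> 'a::euclidean_space set \<Rightarrow> 'a \<Rightarrow> 'a set" where
  "normals_R R A a = {v. norm v = 1 \<and> A \<inter> ball (a + R *\<^sub>R v) R = {}}"

definition R_supported :: "real \<Rightarrow> 'a::euclidean_space set \<Rightarrow> bool" where
  "R_supported R A \<longleftrightarrow> body A \<and> (\<forall>a\<in>frontier A. normals_R R A a \<noteq> {})"

end

theory Submission
  imports Defs
begin

lemma opp_aux:
  fixes p q :: "'a::euclidean_space"
  assumes "norm p = R" "norm q = R" "norm (p - q) \<ge> 2 * R" "R \<ge> 0"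
  shows "p + q = 0"
proof -
  have e: "(norm (p+q))\<^sup>2 + (norm (p-q))\<^sup>2 = 2*(norm p)\<^sup>2 + 2*(norm q)\<^sup>2"
    by (simp add: power2_norm_eq_inner inner_add inner_diff inner_commute)
  have "(norm (p-q))\<^sup>2 \<ge> (2*R)\<^sup>2" using assms(3,4) power_mono[of "2*R" "norm (p-q)" 2] by simp
  hence "(norm (p+q))\<^sup>2 \<le> 0" using e assms(1,2) by (simp add: power2_eq_square)
  thus ?thesis by simp
qed

theorem mainTheorem8:
  fixes A :: "'a::euclidean_space set" and R :: real and a0 :: 'a
  assumes "R > 0"
    and "R_supported R A"
    and "R_supported R (closure (- A))"
    and "a0 \<in> frontier A \<inter> frontier (closure (- A))"
  shows "\<exists>y0 y1.
           ball y0 R \<subseteq> - A \<and> ball y1 R \<subseteq> - closure (- A) \<and>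
           ball y0 R \<inter> ball y1 R = {} \<and>
           frontier (ball y0 R) \<inter> frontier (ball y1 R) = {a0}"
proof -
  obtain v where v: "norm v = 1" "A \<inter> ball (a0 + R *\<^sub>R v) R = {}"
    using assms(2,4) unfolding R_supported_def normals_R_def by blast
  obtain w where w: "norm w = 1" "closure (- A) \<inter> ball (a0 + R *\<^sub>R w) R = {}"
    using assms(3,4) unfolding R_supported_def normals_R_def by blast
  define y0 where "y0 = a0 + R *\<^sub>R v"
  define y1 where "y1 = a0 + R *\<^sub>R w"
  have b0: "ball y0 R \<subseteq> - A" using v y0_def by blast
  have b1: "ball y1 R \<subseteq> - closure (- A)" using w y1_def by blast
  have dj: "ball y0 R \<inter> ball y1 R = {}"
    using b0 b1 closure_subset[of "- A"] by blast
  have dd: "dist y0 y1 \<ge> 2 * R"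
  proof (rule ccontr)
    assume "\<not> ?thesis"
    hence "midpoint y0 y1 \<in> ball y0 R \<inter> ball y1 R"
      by (simp add: dist_midpoint)
    thus False using dj by blast
  qed
  have mid: "z = midpoint y0 y1" if "dist y0 z = R" "dist y1 z = R" for z
  proof -
    have "(y0 - z) + (y1 - z) = 0"
      apply (rule opp_aux[where R=R])
      using that dd assms(1) by (auto simp: dist_norm norm_minus_commute)
    hence "y0 + y1 = 2 *\<^sub>R z" by (simp add: algebra_simps scaleR_2)
    thus ?thesis unfolding midpoint_def
      by (metis scaleR_scaleR nonzero_divide_eq_eq scaleR_one zero_neq_numeral
          divide_inverse_commute mult.commute divide_self_if)
  qed
  have a0s: "dist y0 a0 = R" "dist y1 a0 = R"
    using v(1) w(1) assms(1) by (auto simp: y0_def y1_def dist_norm)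
  have ma: "a0 = midpoint y0 y1" using mid[OF a0s] .
  have "frontier (ball y0 R) \<inter> frontier (ball y1 R) = {a0}"
  proof
    show "frontier (ball y0 R) \<inter> frontier (ball y1 R) \<subseteq> {a0}"
    proof
      fix z assume "z \<in> frontier (ball y0 R) \<inter> frontier (ball y1 R)"
      hence "dist y0 z = R" "dist y1 z = R" using assms(1) by (auto simp: frontier_ball)
      thus "z \<in> {a0}" using mid ma by auto
    qed
    show "{a0} \<subseteq> frontier (ball y0 R) \<inter> frontier (ball y1 R)"
      using a0s assms(1) by (auto simp: frontier_ball)
  qed
  thus ?thesis using b0 b1 dj by blast
qed

end
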